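(* Let $\mathcal{Q}$ be a nonempty convex delta-matroid on a finite set $E$. Let $r=\max\{|S|:S\in\mathcal{Q}\}$, $s=\min\{|S|:S\in\mathcal{Q}\}$, $\ell=r-s$, let $\{1,\dots,\ell\}$ be $\ell$ new elements disjoint from $E$, $E^\flat=E\cup\{1,\dots,\ell\}$, and $\mathcal{Q}^\flat=\{S\subseteq E^\flat: |S|=r \text{ and } S\cap E\in\mathcal{Q}\}$. Then $\mathcal{Q}^\flat$ is the set of bases of a matroid on $E^\flat$.
   Context: $\mathcal{Q}\subseteq 2^E$ is convex if $S\subseteq T\subseteq S'$ with $S,S'\in\mathcal{Q}$ implies $T\in\mathcal{Q}$. $\mathcal{Q}$ is a delta-matroid if for all $A,B\in\mathcal{Q}$ and $e\in A\triangle B$ there is $f\in A\triangle B$ (possibly $f=e$) with $A\triangle\{e,f\}\in\mathcal{Q}$, where $\triangle$ is symmetric difference. *)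

theory Defs
  imports Main
begin

definition convex_family :: "'a set set \<Rightarrow> bool" where
  "convex_family Q \<longleftrightarrow>
     (\<forall>S T S'. S \<in> Q \<and> S' \<in> Q \<and> S \<subseteq> T \<and> T \<subseteq> S' \<longrightarrow> T \<in> Q)"

definition delta_matroid :: "'a set \<Rightarrow> 'a set set \<Rightarrow> bool" where
  "delta_matroid E Q \<longleftrightarrow> Q \<subseteq> Pow E \<and>
     (\<forall>A\<in>Q. \<forall>B\<in>Q. \<forall>e\<in>(A - B) \<union> (B - A).
        \<exists>f\<in>(A - B) \<union> (B - A). (A - {e,f}) \<union> ({e,f} - A) \<in> Q)"

definition matroid_bases :: "'a set \<Rightarrow> 'a set set \<Rightarrow> bool" where
  "matroid_bases E \<B> \<longleftrightarrow> finite E \<and> \<B> \<noteq> {} \<and> \<B> \<subseteq> Pow E \<and>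
     (\<forall>B1\<in>\<B>. \<forall>B2\<in>\<B>. \<forall>x\<in>B1 - B2. \<exists>y\<in>B2 - B1. insert y (B1 - {x}) \<in> \<B>)"

end

theory Submission
  imports Defs
begin

lemma DX:
  assumes "delta_matroid E Q" "A \<in> Q" "B \<in> Q" "e \<in> (A - B) \<union> (B - A)"
  shows "\<exists>f\<in>(A - B) \<union> (B - A). (A - {e,f}) \<union> ({e,f} - A) \<in> Q"
  using assms unfolding delta_matroid_def by blast

lemma CV:
  assumes "convex_family Q" "S \<in> Q" "S' \<in> Q" "S \<subseteq> T" "T \<subseteq> S'"
  shows "T \<in> Q"
  using assms unfolding convex_family_def by blast

lemma finQ:
  assumes "finite E" "delta_matroid E Q" "A \<in> Q"
  shows "finite A"
  using assms unfolding delta_matroid_def by (meson PowD finite_subset subsetD)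

lemma L:
  assumes fin: "finite E" and cv: "convex_family Q" and dm: "delta_matroid E Q"
  shows "A1 \<in> Q \<Longrightarrow> A2 \<in> Q \<Longrightarrow> card A1 < card A2 \<Longrightarrow> \<exists>y\<in>A2-A1. insert y A1 \<in> Q"
proof (induction "card (A1 - A2)" arbitrary: A2 rule: less_induct)
  case less
  have fA1: "finite A1" using finQ[OF fin dm less.prems(1)] .
  have fA2: "finite A2" using finQ[OF fin dm less.prems(2)] .
  show ?case
  proof (cases "A1 - A2 = {}")
    case True
    have "A2 - A1 \<noteq> {}"
    proof
      assume "A2 - A1 = {}"
      then have "A1 = A2" using True by blast
      then show False using less.prems(3) by simp
    qed
    then obtain y where y: "y \<in> A2 - A1" by blast
    have "insert y A1 \<in> Q"
      by (rule CV[OF cv less.prems(1) less.prems(2)]) (use True y in auto)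
    then show ?thesis using y by blast
  next
    case False
    then obtain g where g: "g \<in> A1" "g \<notin> A2" by blast
    obtain f where f: "f \<in> (A2 - A1) \<union> (A1 - A2)"
      and fQ: "(A2 - {g,f}) \<union> ({g,f} - A2) \<in> Q"
      using DX[OF dm less.prems(2) less.prems(1), of g] g by blast
    have lt: "card (A1 - A2 - {g}) < card (A1 - A2)"
      using g fA1 by (meson Diff_iff card_Diff1_less finite_Diff)
    show ?thesis
    proof (cases "f \<in> A1")
      case True
      have "insert g A2 \<in> Q"
      proof (cases "f = g")
        case True
        have "(A2 - {g,f}) \<union> ({g,f} - A2) = insert g A2" using True g by auto
        then show ?thesis using fQ by simp
      next
        case False
        have "(A2 - {g,f}) \<union> ({g,f} - A2) = insert g (insert f A2)" using True False f g by auto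
        then have "insert g (insert f A2) \<in> Q" using fQ by simp
        then show ?thesis
          by (rule CV[OF cv less.prems(2)]) auto
      qed
      moreover have "A1 - insert g A2 = A1 - A2 - {g}" by auto
      moreover have "card A1 < card (insert g A2)" using less.prems(3) g fA2 by simp
      ultimately obtain y where "y \<in> insert g A2 - A1" "insert y A1 \<in> Q"
        using less.hyps less.prems(1) lt by metis
      then show ?thesis using g by auto
    next
      case False
      then have fA2': "f \<in> A2" using f by auto
      have "(A2 - {g,f}) \<union> ({g,f} - A2) = insert g (A2 - {f})" using False fA2' g by auto
      then have Q2: "insert g (A2 - {f}) \<in> Q" using fQ by simp
      have "A1 - insert g (A2 - {f}) = A1 - A2 - {g}" using False by auto
      moreover have "card A1 < card (insert g (A2 - {f}))" using less.prems(3) g fA2 fA2'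
        by (simp add: card_insert_if)
      ultimately obtain y where "y \<in> insert g (A2 - {f}) - A1" "insert y A1 \<in> Q"
        using less.hyps less.prems(1) lt Q2 by metis
      then show ?thesis using g by auto
    qed
  qed
qed


lemma card_sum:
  assumes "finite (B :: ('a + 'b) set)"
  shows "card B = card (Inl -` B) + card (Inr -` B)"
proof -
  have eq: "B = Inl ` (Inl -` B) \<union> Inr ` (Inr -` B)"
    by (auto, case_tac x, auto)
  have f1: "finite (Inl -` B)" using assms by (simp add: finite_vimageI)
  have f2: "finite (Inr -` B)" using assms by (simp add: finite_vimageI)
  have "card (Inl ` (Inl -` B) \<union> Inr ` (Inr -` B) :: ('a + 'b) set) = card (Inl ` (Inl -` B) :: ('a + 'b) set) + card (Inr ` (Inr -` B) :: ('a + 'b) set)"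
    by (rule card_Un_disjoint[OF finite_imageI[OF f1] finite_imageI[OF f2]]) blast
  then have "card B = card (Inl ` (Inl -` B) :: ('a + 'b) set) + card (Inr ` (Inr -` B) :: ('a + 'b) set)"
    by (simp only: eq[symmetric])
  also have "\<dots> = card (Inl -` B) + card (Inr -` B)"
    by (simp add: card_image del: image_vimage_eq)
  finally show ?thesis .
qed

theorem theorem4p12:
  fixes E :: "'a set" and Q :: "'a set set"
  assumes "finite E" and "Q \<noteq> {}" and "convex_family Q" and "delta_matroid E Q"
  defines "r \<equiv> Max (card ` Q)" and "s \<equiv> Min (card ` Q)"
  defines "Eflat \<equiv> Inl ` E \<union> Inr ` {1..r - s}"
  defines "Qflat \<equiv> {S. S \<subseteq> Eflat \<and> card S = r \<and> Inl -` S \<in> Q}"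
  shows "matroid_bases Eflat Qflat"
proof -
  note fin = assms(1) and cv = assms(3) and dm = assms(4)
  have QP: "Q \<subseteq> Pow E" using dm unfolding delta_matroid_def by blast
  have finQ: "finite Q" using QP assms(1) by (meson finite_Pow_iff finite_subset)
  have fcQ: "finite (card ` Q)" "card ` Q \<noteq> {}" using finQ assms(2) by auto
  have Amax: "\<And>A. A \<in> Q \<Longrightarrow> card A \<le> r" unfolding r_def using fcQ by simp
  obtain A0 where A0: "A0 \<in> Q" "card A0 = s"
    using Min_in[OF fcQ] unfolding s_def by auto
  have sr: "s \<le> r" using Amax A0 by metis
  have finEf: "finite Eflat" unfolding Eflat_def using fin by simp
  define S0 where "S0 = Inl ` A0 \<union> Inr ` {1..r - s}"
  have A0E: "A0 \<subseteq> E" using A0 QP by blast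
  have finA0: "finite A0" using A0E fin finite_subset by blast
  have "card S0 = card (Inl ` A0 :: ('a + nat) set) + card (Inr ` {1..r-s} :: ('a + nat) set)"
    unfolding S0_def by (subst card_Un_disjoint) (use finA0 in auto)
  also have "\<dots> = r" using A0 sr by (simp add: card_image)
  finally have cS0: "card S0 = r" .
  have "Inl -` S0 = A0" unfolding S0_def by auto
  moreover have "S0 \<subseteq> Eflat" unfolding S0_def Eflat_def using A0E by auto
  ultimately have "S0 \<in> Qflat" unfolding Qflat_def using cS0 A0 by auto
  then have ne: "Qflat \<noteq> {}" by blast
  have sub: "Qflat \<subseteq> Pow Eflat" unfolding Qflat_def by blast
  have exch: "\<exists>y\<in>B2 - B1. insert y (B1 - {x}) \<in> Qflat"
    if B1: "B1 \<in> Qflat" and B2: "B2 \<in> Qflat" and x: "x \<in> B1 - B2" for B1 B2 x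
  proof -
    define A1 where "A1 = Inl -` B1"
    define A2 where "A2 = Inl -` B2"
    have A1Q: "A1 \<in> Q" and A2Q: "A2 \<in> Q" using B1 B2 unfolding A1_def A2_def Qflat_def by auto
    have fB1: "finite B1" and fB2: "finite B2" using B1 B2 finEf finite_subset
      unfolding Qflat_def by auto
    have cB: "card B1 = r" "card B2 = r" using B1 B2 unfolding Qflat_def by auto
    have cs1: "card B1 = card A1 + card (Inr -` B1)" unfolding A1_def using card_sum[OF fB1] .
    have cs2: "card B2 = card A2 + card (Inr -` B2)" unfolding A2_def using card_sum[OF fB2] .
    have fr1: "finite (Inr -` B1)" using fB1 by (simp add: finite_vimageI)
    have fA1: "finite A1" unfolding A1_def using fB1 by (simp add: finite_vimageI)
    have final: "insert y (B1 - {x}) \<in> Qflat"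
      if y: "y \<in> B2 - B1" and yQ: "Inl -` insert y (B1 - {x}) \<in> Q" for y
    proof -
      have "B1 \<noteq> {}" using x by blast
      then have "card B1 > 0" using fB1 card_gt_0_iff by blast
      then have r0: "r > 0" using cB by simp
      have s1: "insert y (B1 - {x}) \<subseteq> Eflat" using B1 B2 y unfolding Qflat_def by auto
      have c1: "card (insert y (B1 - {x})) = r" using y x fB1 cB r0
        by (simp add: card_insert_if)
      show ?thesis using yQ s1 c1 unfolding Qflat_def by blast
    qed
    show ?thesis
    proof (cases x)
      case (Inr n)
      show ?thesis
      proof (cases "\<exists>m. Inr m \<in> B2 - B1")
        case True
        then obtain m where m: "Inr m \<in> B2 - B1" by blast
        have "Inl -` insert (Inr m) (B1 - {x}) = A1" unfolding A1_def Inr by auto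
        then have "insert (Inr m) (B1 - {x}) \<in> Qflat" using final[OF m] A1Q by simp
        then show ?thesis using m by blast
      next
        case False
        then have s1: "Inr -` B2 \<subseteq> Inr -` B1" by auto
        have "n \<in> Inr -` B1 - Inr -` B2" using x Inr by simp
        then have "Inr -` B2 \<subset> Inr -` B1" using s1 by auto
        then have "card (Inr -` B2) < card (Inr -` B1)" by (rule psubset_card_mono[OF fr1])
        then have "card A1 < card A2" using cs1 cs2 cB by linarith
        then have "\<exists>y\<in>A2-A1. insert y A1 \<in> Q" by (rule L[OF fin cv dm A1Q A2Q])
        then obtain a where a: "a \<in> A2 - A1" "insert a A1 \<in> Q" by blast
        have ya: "Inl a \<in> B2 - B1" using a unfolding A1_def A2_def by auto
        have "Inl -` insert (Inl a) (B1 - {x}) = insert a A1" unfolding A1_def Inr by auto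
        then have "insert (Inl a) (B1 - {x}) \<in> Qflat" using final[OF ya] a by simp
        then show ?thesis using ya by blast
      qed
    next
      case (Inl a)
      have aA: "a \<in> A1" "a \<notin> A2" using x Inl unfolding A1_def A2_def by auto
      obtain f where f: "f \<in> (A1 - A2) \<union> (A2 - A1)"
        and fQ: "(A1 - {a,f}) \<union> ({a,f} - A1) \<in> Q"
        using DX[OF dm A1Q A2Q, of a] aA by blast
      have D0: "(\<exists>f\<in>A2-A1. insert f (A1-{a}) \<in> Q) \<or> A1 - {a} \<in> Q"
      proof (cases "f \<in> A1")
        case True
        show ?thesis
        proof (cases "f = a")
          case True
          have "(A1 - {a,f}) \<union> ({a,f} - A1) = A1 - {a}" using True aA by auto
          then show ?thesis using fQ by simp
        next
          case False
          have "(A1 - {a,f}) \<union> ({a,f} - A1) = A1 - {a} - {f}" using True aA by auto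
          then have "A1 - {a} - {f} \<in> Q" using fQ by simp
          then have "A1 - {a} \<in> Q" by (rule CV[OF cv _ A1Q]) auto
          then show ?thesis by blast
        qed
      next
        case False
        then have "f \<in> A2 - A1" using f by auto
        moreover have "(A1 - {a,f}) \<union> ({a,f} - A1) = insert f (A1 - {a})" using False aA by auto
        ultimately show ?thesis using fQ by auto
      qed
      have D: "(\<exists>f\<in>A2-A1. insert f (A1-{a}) \<in> Q) \<or> (\<exists>m. Inr m \<in> B2 - B1 \<and> A1 - {a} \<in> Q)"
      proof (cases "(\<exists>f\<in>A2-A1. insert f (A1-{a}) \<in> Q)")
        case True then show ?thesis by blast
      next
        case False
        then have Qa: "A1 - {a} \<in> Q" using D0 by blast
        show ?thesis
        proof (cases "\<exists>m. Inr m \<in> B2 - B1")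
          case True then show ?thesis using Qa by blast
        next
          case False
          then have "Inr -` B2 \<subseteq> Inr -` B1" by auto
          then have "card (Inr -` B2) \<le> card (Inr -` B1)" by (rule card_mono[OF fr1])
          then have "card A1 \<le> card A2" using cs1 cs2 cB by linarith
          moreover have "card (A1 - {a}) < card A1" using aA fA1 by (meson card_Diff1_less)
          ultimately have "card (A1 - {a}) < card A2" by linarith
          then have "\<exists>y\<in>A2-(A1 - {a}). insert y (A1 - {a}) \<in> Q" by (rule L[OF fin cv dm Qa A2Q])
          then obtain g where "g \<in> A2 - (A1 - {a})" "insert g (A1 - {a}) \<in> Q" by blast
          then have "\<exists>f\<in>A2-A1. insert f (A1-{a}) \<in> Q" using aA by auto
          then show ?thesis by blast
        qed
      qed
      then show ?thesis
      proof
        assume "\<exists>f\<in>A2-A1. insert f (A1-{a}) \<in> Q"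
        then obtain g where g: "g \<in> A2 - A1" "insert g (A1-{a}) \<in> Q" by blast
        have yg: "Inl g \<in> B2 - B1" using g unfolding A1_def A2_def by auto
        have "Inl -` insert (Inl g) (B1 - {x}) = insert g (A1 - {a})" unfolding A1_def Inl by auto
        then have "insert (Inl g) (B1 - {x}) \<in> Qflat" using final[OF yg] g by simp
        then show ?thesis using yg by blast
      next
        assume "\<exists>m. Inr m \<in> B2 - B1 \<and> A1 - {a} \<in> Q"
        then obtain m where m: "Inr m \<in> B2 - B1" "A1 - {a} \<in> Q" by blast
        have "Inl -` insert (Inr m) (B1 - {x}) = A1 - {a}" unfolding A1_def Inl by auto
        then have "insert (Inr m) (B1 - {x}) \<in> Qflat" using final[OF m(1)] m(2) by simp
        then show ?thesis using m by blast
      qed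
    qed
  qed
  show ?thesis unfolding matroid_bases_def using finEf ne sub exch by blast
qed

end
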